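(* Let $d$ be a positive integer and let $X=\{X_k:k\in\mathbb{Z}^d\}$ be a centered complex-valued random field with $E|X_k|^2=E|X_0|^2<\infty$ for all $k$, such that $\varrho'(X,n)\to0$ as $n\to\infty$ and $E X_kX_j=EX_{k-j}X_0$ for all $k,j\in\mathbb{Z}^d$. Let $\lambda\in\mathfrak P:=(-\pi,\pi]^d\setminus\{-\pi,0,\pi\}^d$, and let $\{\lambda^{(1,n)}\}_{n=1}^\infty$, $\{\lambda^{(2,n)}\}_{n=1}^\infty$ be two sequences in $(-\pi,\pi]^d$ converging to $\lambda$. If $\{v^{(n)}\}$ is a sequence in $\mathbb{N}^d$ with $\lim_{n\to\infty}\min\{v^{(n)}_1,\dots,v^{(n)}_d\}=\infty$, then \[\lim_{n\to\infty}E\left[\frac{S_n^{(\lambda^{(1,n)})}S_n^{(\lambda^{(2,n)})}}{V^{(n)}}\right]=0.\]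
   Context: For $\sigma$-fields $\mathcal A,\mathcal B$, $\varrho(\mathcal A,\mathcal B)=\sup\mathrm{Corr}(f,g)$ over real $f\in L^2(\mathcal A)$, $g\in L^2(\mathcal B)$. $\varrho'(X,n)=\sup_{S,T}\varrho(\sigma(X_k:k\in S),\sigma(X_k:k\in T))$ over finite nonempty $S,T\subset\mathbb{Z}^d$ for which some coordinate $u$ satisfies $|k_u-l_u|\ge n$ for all $k\in S,l\in T$. For $\mu\in(-\pi,\pi]^d$, $X_k^{(\mu)}:=e^{-ik\cdot\mu}X_k$. $\mathfrak B_n:=\{w\in\mathbb{N}^d:1\le w_j\le v^{(n)}_j\}$, $V^{(n)}:=\prod_j v^{(n)}_j$, $S_n^{(\mu)}:=\sum_{k\in\mathfrak B_n}X_k^{(\mu)}$. *)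

theory Defs
  imports "HOL-Probability.Probability"
begin

definition sigma_gen :: "'a measure \<Rightarrow> ('i \<Rightarrow> 'a \<Rightarrow> complex) \<Rightarrow> 'i set \<Rightarrow> 'a measure" where
  "sigma_gen M X S = sigma (space M) (\<Union>k\<in>S. {X k -` A \<inter> space M | A. A \<in> sets borel})"

text \<open>Correlation of real random variables (0 if a variance vanishes, by x/0 = 0).\<close>
definition corr :: "'a measure \<Rightarrow> ('a \<Rightarrow> real) \<Rightarrow> ('a \<Rightarrow> real) \<Rightarrow> real" where
  "corr M f g =
     ((\<integral>x. f x * g x \<partial>M) - (\<integral>x. f x \<partial>M) * (\<integral>x. g x \<partial>M)) /
     sqrt (((\<integral>x. (f x)\<^sup>2 \<partial>M) - (\<integral>x. f x \<partial>M)\<^sup>2) * ((\<integral>x. (g x)\<^sup>2 \<partial>M) - (\<integral>x. g x \<partial>M)\<^sup>2))"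

definition max_corr :: "'a measure \<Rightarrow> 'a measure \<Rightarrow> 'a measure \<Rightarrow> real" where
  "max_corr M A B = Sup {corr M f g | f g.
      f \<in> borel_measurable A \<and> integrable M (\<lambda>x. (f x)\<^sup>2) \<and>
      g \<in> borel_measurable B \<and> integrable M (\<lambda>x. (g x)\<^sup>2)}"

definition rho' :: "'a measure \<Rightarrow> (int^'d \<Rightarrow> 'a \<Rightarrow> complex) \<Rightarrow> nat \<Rightarrow> real" where
  "rho' M X n = Sup {max_corr M (sigma_gen M X S) (sigma_gen M X T) | S T.
      finite S \<and> S \<noteq> {} \<and> finite T \<and> T \<noteq> {} \<and>
      (\<exists>u. \<forall>k\<in>S. \<forall>l\<in>T. \<bar>k$u - l$u\<bar> \<ge> int n)}"

definition kdot :: "int^'d \<Rightarrow> real^'d \<Rightarrow> real" where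
  "kdot k \<mu> = (\<Sum>j\<in>UNIV. real_of_int (k$j) * \<mu>$j)"

definition box :: "nat^'d \<Rightarrow> (int^'d) set" where
  "box_def": "box v = {w. \<forall>j. 1 \<le> w$j \<and> w$j \<le> int (v$j)}"

definition partial_sum :: "(int^'d \<Rightarrow> 'a \<Rightarrow> complex) \<Rightarrow> nat^'d \<Rightarrow> real^'d \<Rightarrow> 'a \<Rightarrow> complex" where
  "partial_sum X v \<mu> \<omega> = (\<Sum>k\<in>box v. exp (- \<i> * of_real (kdot k \<mu>)) * X k \<omega>)"

definition vol :: "nat^'d \<Rightarrow> nat" where
  "vol v = (\<Prod>j\<in>UNIV. v$j)"

end

theory Submission imports Defs begin

definition sqi :: "'a measure \<Rightarrow> ('a \<Rightarrow> complex) \<Rightarrow> bool" where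
  "sqi M f \<longleftrightarrow> f \<in> borel_measurable M \<and> integrable M (\<lambda>x. (cmod (f x))\<^sup>2)"

definition nrm :: "'a measure \<Rightarrow> ('a \<Rightarrow> complex) \<Rightarrow> real" where
  "nrm M f = (\<integral>x. (cmod (f x))\<^sup>2 \<partial>M)"

lemma quad_disc:
  fixes A B C :: real
  assumes "\<And>t. 0 \<le> A + 2*t*B + t^2*C"
  shows "B^2 \<le> A * C"
proof (cases "C = 0")
  case True
  have "B = 0"
  proof (rule ccontr)
    assume "B \<noteq> 0"
    have "0 \<le> A + 2*(-(A+1)/(2*B))*B + (-(A+1)/(2*B))^2*C" by (rule assms)
    also have "\<dots> = -1" using True \<open>B \<noteq> 0\<close> by (simp add: field_simps)
    finally show False by simp
  qed
  then show ?thesis using True assms[of 0] by simp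
next
  case False
  have C0: "C \<ge> 0"
  proof (rule ccontr)
    assume "\<not> C \<ge> 0"
    then have "C < 0" by simp
    obtain t :: real where t: "t \<ge> 1" "t \<ge> (\<bar>A\<bar> + 2*\<bar>B\<bar> + 1) / (- C)"
      by (meson max.cobounded1 max.cobounded2)
    have "t^2*C = t*(t*C)" by (simp add: power2_eq_square)
    have "t*C \<le> -(\<bar>A\<bar> + 2*\<bar>B\<bar> + 1)" using t \<open>C<0\<close>
      by (simp add: field_simps)
    then have "t*(t*C) \<le> t * (-(\<bar>A\<bar> + 2*\<bar>B\<bar> + 1))" using t by (intro mult_left_mono) auto
    then have "A + 2*t*B + t^2*C \<le> A + 2*t*B - t*(\<bar>A\<bar> + 2*\<bar>B\<bar> + 1)"
      by (simp add: power2_eq_square algebra_simps)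
    also have "\<dots> < 0"
    proof -
      have "A \<le> t*\<bar>A\<bar>" using t by (smt (verit) mult_le_cancel_right1 abs_ge_self)
      moreover have "t*(2*B) \<le> t*(2*\<bar>B\<bar>)" using t by (intro mult_left_mono) auto
      moreover have "A + 2*t*B - t*(\<bar>A\<bar> + 2*\<bar>B\<bar> + 1) = (A - t*\<bar>A\<bar>) + (t*(2*B) - t*(2*\<bar>B\<bar>)) - t"
        by (simp add: algebra_simps)
      ultimately show ?thesis using t by linarith
    qed
    finally show False using assms[of t] by simp
  qed
  with False have "C > 0" by simp
  have "0 \<le> A + 2*(-B/C)*B + (-B/C)^2*C" by (rule assms)
  also have "\<dots> = A - B^2/C" using \<open>C>0\<close> by (simp add: field_simps power2_eq_square)
  finally show ?thesis using \<open>C>0\<close> by (simp add: field_simps)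
qed

lemma real_CS:
  fixes f g :: "'a \<Rightarrow> real"
  assumes f: "f \<in> borel_measurable M" and g: "g \<in> borel_measurable M"
    and f2: "integrable M (\<lambda>x. (f x)\<^sup>2)" and g2: "integrable M (\<lambda>x. (g x)\<^sup>2)"
  shows "integrable M (\<lambda>x. f x * g x)"
    and "(\<integral>x. f x * g x \<partial>M)^2 \<le> (\<integral>x. (f x)\<^sup>2 \<partial>M) * (\<integral>x. (g x)\<^sup>2 \<partial>M)"
proof -
  show fg: "integrable M (\<lambda>x. f x * g x)"
  proof (rule Bochner_Integration.integrable_bound[of _ "\<lambda>x. (f x)\<^sup>2 + (g x)\<^sup>2"])
    show "integrable M (\<lambda>x. (f x)\<^sup>2 + (g x)\<^sup>2)" using f2 g2 by auto
    show "(\<lambda>x. f x * g x) \<in> borel_measurable M" using f g by measurable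
    show "AE x in M. norm (f x * g x) \<le> norm ((f x)\<^sup>2 + (g x)\<^sup>2)"
    proof (rule AE_I2)
      fix x
      have "0 \<le> (\<bar>f x\<bar> - \<bar>g x\<bar>)^2" by simp
      then have "2*(\<bar>f x\<bar> * \<bar>g x\<bar>) \<le> (f x)\<^sup>2 + (g x)\<^sup>2"
        by (simp add: power2_eq_square algebra_simps)
      moreover have "0 \<le> \<bar>f x\<bar> * \<bar>g x\<bar>" by simp
      ultimately have "\<bar>f x * g x\<bar> \<le> (f x)\<^sup>2 + (g x)\<^sup>2"
        unfolding abs_mult by linarith
      then show "norm (f x * g x) \<le> norm ((f x)\<^sup>2 + (g x)\<^sup>2)" by simp
    qed
  qed
  show "(\<integral>x. f x * g x \<partial>M)^2 \<le> (\<integral>x. (f x)\<^sup>2 \<partial>M) * (\<integral>x. (g x)\<^sup>2 \<partial>M)"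
  proof (rule quad_disc)
    fix t :: real
    have "0 \<le> (\<integral>x. (f x + t * g x)\<^sup>2 \<partial>M)" by simp
    also have "(\<lambda>x. (f x + t * g x)\<^sup>2) = (\<lambda>x. (f x)\<^sup>2 + 2*t*(f x * g x) + t^2 * (g x)\<^sup>2)"
      by (simp add: power2_eq_square algebra_simps)
    also have "(\<integral>x. (f x)\<^sup>2 + 2*t*(f x * g x) + t^2 * (g x)\<^sup>2 \<partial>M)
       = (\<integral>x. (f x)\<^sup>2 \<partial>M) + 2*t*(\<integral>x. f x * g x \<partial>M) + t^2*(\<integral>x. (g x)\<^sup>2 \<partial>M)"
      using f2 g2 fg by simp
    finally show "0 \<le> (\<integral>x. (f x)\<^sup>2 \<partial>M) + 2*t*(\<integral>x. f x * g x \<partial>M) + t^2*(\<integral>x. (g x)\<^sup>2 \<partial>M)" .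
  qed
qed

lemma real_CS':
  fixes f g :: "'a \<Rightarrow> real"
  assumes f: "f \<in> borel_measurable M" and g: "g \<in> borel_measurable M"
    and f2: "integrable M (\<lambda>x. (f x)\<^sup>2)" and g2: "integrable M (\<lambda>x. (g x)\<^sup>2)"
  shows "(\<integral>x. f x * g x \<partial>M) \<le> sqrt (\<integral>x. (f x)\<^sup>2 \<partial>M) * sqrt (\<integral>x. (g x)\<^sup>2 \<partial>M)"
proof -
  have "(\<integral>x. f x * g x \<partial>M)^2 \<le> (\<integral>x. (f x)\<^sup>2 \<partial>M) * (\<integral>x. (g x)\<^sup>2 \<partial>M)"
    using real_CS[OF assms] by simp
  then have "\<bar>\<integral>x. f x * g x \<partial>M\<bar> \<le> sqrt ((\<integral>x. (f x)\<^sup>2 \<partial>M) * (\<integral>x. (g x)\<^sup>2 \<partial>M))"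
    by (simp add: real_le_rsqrt)
  then show ?thesis by (simp add: real_sqrt_mult)
qed

lemma cmod_add_sq_le: "(cmod (a + b))\<^sup>2 \<le> 2 * (cmod a)\<^sup>2 + 2 * (cmod b)\<^sup>2"
proof -
  have "cmod (a+b) \<le> cmod a + cmod b" by (rule norm_triangle_ineq)
  then have "(cmod (a+b))\<^sup>2 \<le> (cmod a + cmod b)\<^sup>2" by (simp add: power_mono)
  also have "\<dots> \<le> 2 * (cmod a)\<^sup>2 + 2 * (cmod b)\<^sup>2"
  proof -
    have "0 \<le> (cmod a - cmod b)\<^sup>2" by simp
    then show ?thesis by (simp add: power2_eq_square algebra_simps)
  qed
  finally show ?thesis .
qed

lemma cmod_add_sq: "(cmod (a + b))\<^sup>2 = (cmod a)\<^sup>2 + (cmod b)\<^sup>2 + 2 * Re (a * cnj b)"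
  unfolding cmod_power2 by (simp add: power2_eq_square algebra_simps)

lemma cmod_diff_sq: "(cmod (a - b))\<^sup>2 = (cmod a)\<^sup>2 + (cmod b)\<^sup>2 - 2 * Re (a * cnj b)"
  unfolding cmod_power2 by (simp add: power2_eq_square algebra_simps)

lemma integral_3:
  fixes A B C :: "'a \<Rightarrow> real"
  assumes "integrable M A" "integrable M B" "integrable M C"
  shows "(\<integral>x. A x + B x + 2 * C x \<partial>M) = integral\<^sup>L M A + integral\<^sup>L M B + 2 * integral\<^sup>L M C"
    and "(\<integral>x. A x + B x - 2 * C x \<partial>M) = integral\<^sup>L M A + integral\<^sup>L M B - 2 * integral\<^sup>L M C"
  using assms by simp_all

lemma sqi_add: "sqi M f \<Longrightarrow> sqi M g \<Longrightarrow> sqi M (\<lambda>x. f x + g x)"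
  unfolding sqi_def
proof (intro conjI)
  assume a: "f \<in> borel_measurable M \<and> integrable M (\<lambda>x. (cmod (f x))\<^sup>2)"
     "g \<in> borel_measurable M \<and> integrable M (\<lambda>x. (cmod (g x))\<^sup>2)"
  then show m: "(\<lambda>x. f x + g x) \<in> borel_measurable M" by auto
  show "integrable M (\<lambda>x. (cmod (f x + g x))\<^sup>2)"
  proof (rule Bochner_Integration.integrable_bound[of _ "\<lambda>x. 2 * (cmod (f x))\<^sup>2 + 2 * (cmod (g x))\<^sup>2"])
    show "integrable M (\<lambda>x. 2 * (cmod (f x))\<^sup>2 + 2 * (cmod (g x))\<^sup>2)" using a by auto
    show "(\<lambda>x. (cmod (f x + g x))\<^sup>2) \<in> borel_measurable M" using m by measurable
    show "AE x in M. norm ((cmod (f x + g x))\<^sup>2) \<le> norm (2 * (cmod (f x))\<^sup>2 + 2 * (cmod (g x))\<^sup>2)"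
      using cmod_add_sq_le by (intro AE_I2) auto
  qed
qed

lemma sqi_cmult: "sqi M f \<Longrightarrow> sqi M (\<lambda>x. c * f x)"
  unfolding sqi_def by (auto simp: norm_mult power_mult_distrib)

lemma sqi_uminus: "sqi M f \<Longrightarrow> sqi M (\<lambda>x. - f x)"
  using sqi_cmult[of M f "-1"] by simp

lemma sqi_diff: "sqi M f \<Longrightarrow> sqi M g \<Longrightarrow> sqi M (\<lambda>x. f x - g x)"
  using sqi_add[of M f "\<lambda>x. - g x"] sqi_uminus[of M g] by simp

lemma sqi_zero: "sqi M (\<lambda>x. 0)"
  unfolding sqi_def by simp

lemma sqi_sum: "(\<And>i. i \<in> I \<Longrightarrow> sqi M (f i)) \<Longrightarrow> sqi M (\<lambda>x. \<Sum>i\<in>I. f i x)"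
proof (induction I rule: infinite_finite_induct)
  case (infinite A) then show ?case by (simp add: sqi_zero)
next
  case empty then show ?case by (simp add: sqi_zero)
next
  case (insert a A)
  then show ?case using sqi_add[of M "f a" "\<lambda>x. \<Sum>i\<in>A. f i x"] by simp
qed

lemma sqi_prod:
  assumes "sqi M f" "sqi M g"
  shows "integrable M (\<lambda>x. cmod (f x) * cmod (g x))"
    and "(\<integral>x. cmod (f x) * cmod (g x) \<partial>M) \<le> sqrt (nrm M f) * sqrt (nrm M g)"
  using real_CS(1)[of "\<lambda>x. cmod (f x)" M "\<lambda>x. cmod (g x)"]
     real_CS'[of "\<lambda>x. cmod (f x)" M "\<lambda>x. cmod (g x)"] assms
  unfolding sqi_def nrm_def by auto

lemma sqi_mult_int:
  assumes "sqi M f" "sqi M g"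
  shows "integrable M (\<lambda>x. f x * g x)"
proof (rule Bochner_Integration.integrable_bound[OF sqi_prod(1)[OF assms]])
  show "(\<lambda>x. f x * g x) \<in> borel_measurable M" using assms unfolding sqi_def by auto
qed (auto simp: norm_mult)

lemma sqi_re_int:
  assumes "sqi M f" "sqi M g"
  shows "integrable M (\<lambda>x. Re (f x * cnj (g x)))"
proof (rule Bochner_Integration.integrable_bound[OF sqi_prod(1)[OF assms]])
  show "(\<lambda>x. Re (f x * cnj (g x))) \<in> borel_measurable M" using assms unfolding sqi_def by auto
  show "AE x in M. norm (Re (f x * cnj (g x))) \<le> norm (cmod (f x) * cmod (g x))"
  proof (rule AE_I2)
    fix x
    have "\<bar>Re (f x * cnj (g x))\<bar> \<le> cmod (f x * cnj (g x))" by (rule abs_Re_le_cmod)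
    then show "norm (Re (f x * cnj (g x))) \<le> norm (cmod (f x) * cmod (g x))" by (simp add: norm_mult)
  qed
qed

lemma nrm_nonneg: "0 \<le> nrm M f"
  unfolding nrm_def by simp

lemma nrm_add:
  assumes "sqi M f" "sqi M g"
  shows "nrm M (\<lambda>x. f x + g x) = nrm M f + nrm M g + 2 * (\<integral>x. Re (f x * cnj (g x)) \<partial>M)"
  using assms sqi_re_int[OF assms] unfolding nrm_def sqi_def cmod_add_sq by (intro integral_3) auto

lemma nrm_diff:
  assumes "sqi M f" "sqi M g"
  shows "nrm M (\<lambda>x. f x - g x) = nrm M f + nrm M g - 2 * (\<integral>x. Re (f x * cnj (g x)) \<partial>M)"
  using assms sqi_re_int[OF assms] unfolding nrm_def sqi_def cmod_diff_sq by (intro integral_3) auto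

lemma cplx_CS:
  assumes "sqi M f" "sqi M g"
  shows "cmod (\<integral>x. f x * g x \<partial>M) \<le> sqrt (nrm M f) * sqrt (nrm M g)"
proof -
  have "cmod (\<integral>x. f x * g x \<partial>M) \<le> (\<integral>x. cmod (f x * g x) \<partial>M)" by (rule integral_norm_bound)
  also have "\<dots> = (\<integral>x. cmod (f x) * cmod (g x) \<partial>M)" by (simp add: norm_mult)
  also have "\<dots> \<le> sqrt (nrm M f) * sqrt (nrm M g)" by (rule sqi_prod(2)[OF assms])
  finally show ?thesis .
qed

lemma cmod_sum_sq_le: "(cmod (\<Sum>i\<in>I. a i))\<^sup>2 \<le> real (card I) * (\<Sum>i\<in>I. (cmod (a i))\<^sup>2)"
proof -
  have "cmod (\<Sum>i\<in>I. a i) \<le> (\<Sum>i\<in>I. cmod (a i))" by (rule norm_sum)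
  then have "(cmod (\<Sum>i\<in>I. a i))\<^sup>2 \<le> (\<Sum>i\<in>I. cmod (a i))\<^sup>2" by (simp add: power_mono)
  also have "\<dots> = (\<Sum>i\<in>I. 1 * cmod (a i))\<^sup>2" by simp
  also have "\<dots> \<le> (\<Sum>i\<in>I. 1\<^sup>2) * (\<Sum>i\<in>I. (cmod (a i))\<^sup>2)" by (rule Cauchy_Schwarz_ineq_sum)
  also have "\<dots> = real (card I) * (\<Sum>i\<in>I. (cmod (a i))\<^sup>2)" by simp
  finally show ?thesis .
qed

lemma nrm_sum_le:
  assumes "\<And>i. i \<in> I \<Longrightarrow> sqi M (Y i)"
  shows "nrm M (\<lambda>x. \<Sum>i\<in>I. Y i x) \<le> real (card I) * (\<Sum>i\<in>I. nrm M (Y i))"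
proof -
  have "nrm M (\<lambda>x. \<Sum>i\<in>I. Y i x) \<le> (\<integral>x. real (card I) * (\<Sum>i\<in>I. (cmod (Y i x))\<^sup>2) \<partial>M)"
    unfolding nrm_def
  proof (rule integral_mono)
    show "integrable M (\<lambda>x. (cmod (\<Sum>i\<in>I. Y i x))\<^sup>2)"
      using sqi_sum[of I M Y] assms unfolding sqi_def by auto
    show "integrable M (\<lambda>x. real (card I) * (\<Sum>i\<in>I. (cmod (Y i x))\<^sup>2))"
      using assms unfolding sqi_def by auto
  qed (rule cmod_sum_sq_le)
  also have "\<dots> = real (card I) * (\<Sum>i\<in>I. nrm M (Y i))"
    using assms unfolding sqi_def nrm_def by (simp add: integral_sum)
  finally show ?thesis .
qed

lemma sqrt_mult_le_avg: "0 \<le> a \<Longrightarrow> 0 \<le> b \<Longrightarrow> sqrt a * sqrt b \<le> (a + b) / 2"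
proof -
  assume "0 \<le> a" "0 \<le> b"
  have "0 \<le> (sqrt a - sqrt b)\<^sup>2" by simp
  then show ?thesis using \<open>0 \<le> a\<close> \<open>0 \<le> b\<close> by (simp add: power2_eq_square algebra_simps)
qed

lemma sign_lemma:
  assumes Y: "sqi M Y" and Z: "sqi M Z"
    and H: "(\<integral>x. Re (Y x * cnj (Z x)) \<partial>M) \<le> 1/2 * sqrt (nrm M Y) * sqrt (nrm M Z)"
  shows "nrm M (\<lambda>x. Y x + Z x) \<le> 3 * nrm M (\<lambda>x. Y x - Z x)"
proof -
  have "sqrt (nrm M Y) * sqrt (nrm M Z) \<le> (nrm M Y + nrm M Z) / 2"
    by (rule sqrt_mult_le_avg) (simp_all add: nrm_nonneg)
  then have h1: "2 * (sqrt (nrm M Y) * sqrt (nrm M Z)) \<le> nrm M Y + nrm M Z" by simp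
  have h2: "2 * (\<integral>x. Re (Y x * cnj (Z x)) \<partial>M) \<le> sqrt (nrm M Y) * sqrt (nrm M Z)"
    using H by simp
  have key: "\<And>(p::real) R np nm a b. 2*p \<le> (a+b) \<Longrightarrow> 2*R \<le> p \<Longrightarrow> np = a+b+2*R \<Longrightarrow> nm = a+b-2*R \<Longrightarrow> np \<le> 3*nm"
    by linarith
  show ?thesis by (rule key[OF h1 h2 nrm_add[OF Y Z] nrm_diff[OF Y Z]])
qed

lemma sqi_if: "sqi M f \<Longrightarrow> sqi M (\<lambda>x. if c then f x else - f x)"
  by (cases c) (auto simp: sqi_uminus)

lemma nrm_zero: "nrm M (\<lambda>x. 0) = 0"
  unfolding nrm_def by simp

lemma subset_avg:
  assumes "finite T" "\<And>t. t \<in> T \<Longrightarrow> sqi M (W t)"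
  shows "(\<Sum>P\<in>Pow T. nrm M (\<lambda>x. \<Sum>t\<in>T. if t \<in> P then W t x else - W t x))
         = 2 ^ card T * (\<Sum>t\<in>T. nrm M (W t))"
  using assms
proof (induction T rule: finite_induct)
  case empty
  then show ?case by (simp add: nrm_zero)
next
  case (insert a T)
  define D where "D P = (\<lambda>x. \<Sum>t\<in>T. if t \<in> P then W t x else - W t x)" for P
  have sqD: "sqi M (D P)" for P
    unfolding D_def using insert by (intro sqi_sum sqi_if) auto
  have sqW: "sqi M (W a)" using insert by auto
  have e1: "(\<lambda>x. \<Sum>t\<in>insert a T. if t \<in> P then W t x else - W t x) = (\<lambda>x. D P x - W a x)"
    if "P \<in> Pow T" for P
  proof -
    have "a \<notin> P" using that insert by auto
    then show ?thesis by (auto simp: D_def insert.hyps)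
  qed
  have e2: "(\<lambda>x. \<Sum>t\<in>insert a T. if t \<in> insert a P then W t x else - W t x) = (\<lambda>x. D P x + W a x)"
    if "P \<in> Pow T" for P
  proof -
    have "(\<Sum>t\<in>T. if t \<in> insert a P then W t x else - W t x) = D P x" for x
      unfolding D_def using insert by (intro sum.cong) auto
    then show ?thesis using insert by (simp add: D_def add.commute)
  qed
  have inj: "inj_on (insert a) (Pow T)"
  proof (rule inj_onI)
    fix x y assume "x \<in> Pow T" "y \<in> Pow T" "insert a x = insert a y"
    then have "a \<notin> x" "a \<notin> y" using insert by auto
    then show "x = y" using \<open>insert a x = insert a y\<close> by (metis Diff_insert_absorb)
  qed
  have disj: "Pow T \<inter> insert a ` Pow T = {}" using insert by auto
  have "(\<Sum>P\<in>Pow (insert a T). nrm M (\<lambda>x. \<Sum>t\<in>insert a T. if t \<in> P then W t x else - W t x))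
     = (\<Sum>P\<in>Pow T. nrm M (\<lambda>x. \<Sum>t\<in>insert a T. if t \<in> P then W t x else - W t x))
       + (\<Sum>P\<in>Pow T. nrm M (\<lambda>x. \<Sum>t\<in>insert a T. if t \<in> insert a P then W t x else - W t x))"
    unfolding Pow_insert using insert disj inj by (simp add: sum.union_disjoint sum.reindex)
  also have "(\<Sum>P\<in>Pow T. nrm M (\<lambda>x. \<Sum>t\<in>insert a T. if t \<in> P then W t x else - W t x))
      = (\<Sum>P\<in>Pow T. nrm M (\<lambda>x. D P x - W a x))"
    by (rule sum.cong[OF refl], subst e1, assumption, rule refl)
  also have "(\<Sum>P\<in>Pow T. nrm M (\<lambda>x. \<Sum>t\<in>insert a T. if t \<in> insert a P then W t x else - W t x))
      = (\<Sum>P\<in>Pow T. nrm M (\<lambda>x. D P x + W a x))"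
    by (rule sum.cong[OF refl], subst e2, assumption, rule refl)
  also have "(\<Sum>P\<in>Pow T. nrm M (\<lambda>x. D P x - W a x)) + (\<Sum>P\<in>Pow T. nrm M (\<lambda>x. D P x + W a x))
     = (\<Sum>P\<in>Pow T. nrm M (\<lambda>x. D P x - W a x) + nrm M (\<lambda>x. D P x + W a x))"
    by (simp add: sum.distrib)
  also have "\<dots> = (\<Sum>P\<in>Pow T. 2 * nrm M (D P) + 2 * nrm M (W a))"
    by (intro sum.cong refl) (simp add: nrm_add[OF sqD sqW] nrm_diff[OF sqD sqW])
  also have "\<dots> = 2 * (\<Sum>P\<in>Pow T. nrm M (D P)) + 2 * 2 ^ card T * nrm M (W a)"
    using insert by (simp add: sum.distrib sum_distrib_left card_Pow)
  also have "\<dots> = 2 ^ card (insert a T) * (\<Sum>t\<in>insert a T. nrm M (W t))"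
    using insert by (simp add: D_def algebra_simps)
  finally show ?case .
qed

lemma avg_bound:
  assumes "finite T" "\<And>t. t \<in> T \<Longrightarrow> sqi M (W t)"
    and H: "\<And>P. P \<subseteq> T \<Longrightarrow> (\<integral>x. Re ((\<Sum>t\<in>P. W t x) * cnj (\<Sum>t\<in>T-P. W t x)) \<partial>M)
             \<le> 1/2 * sqrt (nrm M (\<lambda>x. \<Sum>t\<in>P. W t x)) * sqrt (nrm M (\<lambda>x. \<Sum>t\<in>T-P. W t x))"
  shows "nrm M (\<lambda>x. \<Sum>t\<in>T. W t x) \<le> 3 * (\<Sum>t\<in>T. nrm M (W t))"
proof -
  have each: "nrm M (\<lambda>x. \<Sum>t\<in>T. W t x) \<le> 3 * nrm M (\<lambda>x. \<Sum>t\<in>T. if t \<in> P then W t x else - W t x)"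
    if P: "P \<in> Pow T" for P
  proof -
    have PT: "P \<subseteq> T" using P by auto
    have fP: "finite P" using PT assms(1) finite_subset by auto
    have s1: "(\<lambda>x. \<Sum>t\<in>T. W t x) = (\<lambda>x. (\<Sum>t\<in>P. W t x) + (\<Sum>t\<in>T-P. W t x))"
    proof (rule ext)
      fix x show "(\<Sum>t\<in>T. W t x) = (\<Sum>t\<in>P. W t x) + (\<Sum>t\<in>T-P. W t x)"
        using sum.subset_diff[OF PT assms(1), of "\<lambda>t. W t x"] by (simp add: add.commute)
    qed
    have s2: "(\<lambda>x. \<Sum>t\<in>T. if t \<in> P then W t x else - W t x) = (\<lambda>x. (\<Sum>t\<in>P. W t x) - (\<Sum>t\<in>T-P. W t x))"
    proof
      fix x
      have "(\<Sum>t\<in>T. if t \<in> P then W t x else - W t x) = (\<Sum>t\<in>T \<inter> {t. t\<in>P}. W t x) + (\<Sum>t\<in>T \<inter> - {t. t\<in>P}. - W t x)"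
        by (rule sum.If_cases[OF assms(1)])
      also have "T \<inter> {t. t\<in>P} = P" using PT by auto
      also have "T \<inter> - {t. t\<in>P} = T - P" by auto
      finally show "(\<Sum>t\<in>T. if t \<in> P then W t x else - W t x) = (\<Sum>t\<in>P. W t x) - (\<Sum>t\<in>T-P. W t x)"
        by (simp add: sum_negf)
    qed
    have sY: "sqi M (\<lambda>x. \<Sum>t\<in>P. W t x)" using PT assms(2) by (intro sqi_sum) auto
    have sZ: "sqi M (\<lambda>x. \<Sum>t\<in>T-P. W t x)" using assms(2) by (intro sqi_sum) auto
    show ?thesis unfolding s1 s2 by (rule sign_lemma[OF sY sZ H[OF PT]])
  qed
  have "(\<Sum>P\<in>Pow T. nrm M (\<lambda>x. \<Sum>t\<in>T. W t x)) \<le> (\<Sum>P\<in>Pow T. 3 * nrm M (\<lambda>x. \<Sum>t\<in>T. if t \<in> P then W t x else - W t x))"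
    by (rule sum_mono) (rule each)
  then have "2 ^ card T * nrm M (\<lambda>x. \<Sum>t\<in>T. W t x) \<le> 3 * (2 ^ card T * (\<Sum>t\<in>T. nrm M (W t)))"
    using assms(1) by (simp add: card_Pow sum_distrib_left[symmetric] subset_avg[OF assms(1,2)])
  then show ?thesis by (simp add: algebra_simps)
qed

lemma meas_sub: "space A = space M \<Longrightarrow> sets A \<subseteq> sets M \<Longrightarrow> f \<in> measurable A N \<Longrightarrow> f \<in> measurable M N"
  unfolding measurable_def by auto

context prob_space
begin

lemma corr_le_1:
  fixes f g :: "'a \<Rightarrow> real"
  assumes f: "f \<in> borel_measurable M" and g: "g \<in> borel_measurable M"
    and f2: "integrable M (\<lambda>x. (f x)\<^sup>2)" and g2: "integrable M (\<lambda>x. (g x)\<^sup>2)"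
  shows "corr M f g \<le> 1"
proof -
  have fi: "integrable M f" using square_integrable_imp_integrable[OF f f2] .
  have gi: "integrable M g" using square_integrable_imp_integrable[OF g g2] .
  have fgi: "integrable M (\<lambda>x. f x * g x)" by (rule real_CS(1)[OF f g f2 g2])
  define a where "a = (\<integral>x. f x \<partial>M)"
  define b where "b = (\<integral>x. g x \<partial>M)"
  have f0: "(\<lambda>x. f x - a) \<in> borel_measurable M" using f by simp
  have g0: "(\<lambda>x. g x - b) \<in> borel_measurable M" using g by simp
  have ef: "(\<lambda>x. (f x - a)\<^sup>2) = (\<lambda>x. (f x)\<^sup>2 - 2*a * f x + a\<^sup>2)"
    by (simp add: power2_eq_square algebra_simps)
  have eg: "(\<lambda>x. (g x - b)\<^sup>2) = (\<lambda>x. (g x)\<^sup>2 - 2*b * g x + b\<^sup>2)"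
    by (simp add: power2_eq_square algebra_simps)
  have efg: "(\<lambda>x. (f x - a) * (g x - b)) = (\<lambda>x. f x * g x - a * g x - b * f x + a * b)"
    by (simp add: algebra_simps)
  have f02: "integrable M (\<lambda>x. (f x - a)\<^sup>2)" unfolding ef using fi f2 by auto
  have g02: "integrable M (\<lambda>x. (g x - b)\<^sup>2)" unfolding eg using gi g2 by auto
  have If: "(\<integral>x. (f x - a)\<^sup>2 \<partial>M) = (\<integral>x. (f x)\<^sup>2 \<partial>M) - a\<^sup>2"
    unfolding ef using fi f2 by (simp add: a_def power2_eq_square prob_space)
  have Ig: "(\<integral>x. (g x - b)\<^sup>2 \<partial>M) = (\<integral>x. (g x)\<^sup>2 \<partial>M) - b\<^sup>2"
    unfolding eg using gi g2 by (simp add: b_def power2_eq_square prob_space)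
  have Ifg: "(\<integral>x. (f x - a) * (g x - b) \<partial>M) = (\<integral>x. f x * g x \<partial>M) - a * b"
    unfolding efg using fi gi fgi by (simp add: a_def b_def prob_space)
  have cs: "(\<integral>x. (f x - a) * (g x - b) \<partial>M) \<le> sqrt (\<integral>x. (f x - a)\<^sup>2 \<partial>M) * sqrt (\<integral>x. (g x - b)\<^sup>2 \<partial>M)"
    by (rule real_CS'[OF f0 g0 f02 g02])
  have "corr M f g = ((\<integral>x. (f x - a) * (g x - b) \<partial>M)) / (sqrt (\<integral>x. (f x - a)\<^sup>2 \<partial>M) * sqrt (\<integral>x. (g x - b)\<^sup>2 \<partial>M))"
    unfolding Ifg If Ig by (simp add: corr_def a_def b_def real_sqrt_mult)
  also have "\<dots> \<le> 1"
  proof -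
    have D0: "0 \<le> sqrt (\<integral>x. (f x - a)\<^sup>2 \<partial>M) * sqrt (\<integral>x. (g x - b)\<^sup>2 \<partial>M)"
      by (intro mult_nonneg_nonneg real_sqrt_ge_zero integral_nonneg) auto
    show ?thesis
    proof (cases "sqrt (\<integral>x. (f x - a)\<^sup>2 \<partial>M) * sqrt (\<integral>x. (g x - b)\<^sup>2 \<partial>M) = 0")
      case True then show ?thesis by (simp only: div_by_0)
    next
      case False
      then have "0 < sqrt (\<integral>x. (f x - a)\<^sup>2 \<partial>M) * sqrt (\<integral>x. (g x - b)\<^sup>2 \<partial>M)" using D0 by linarith
      then show ?thesis using cs by (simp add: divide_le_eq_1)
    qed
  qed
  finally show ?thesis .
qed

lemma max_corr_ge:
  assumes A: "space A = space M" "sets A \<subseteq> sets M" and B: "space B = space M" "sets B \<subseteq> sets M"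
    and f: "f \<in> borel_measurable A" and g: "g \<in> borel_measurable B"
    and f2: "integrable M (\<lambda>x. (f x)\<^sup>2)" and g2: "integrable M (\<lambda>x. (g x)\<^sup>2)"
  shows "corr M f g \<le> max_corr M A B"
  unfolding max_corr_def
proof (rule cSup_upper)
  show "corr M f g \<in> {corr M f g | f g.
      f \<in> borel_measurable A \<and> integrable M (\<lambda>x. (f x)\<^sup>2) \<and>
      g \<in> borel_measurable B \<and> integrable M (\<lambda>x. (g x)\<^sup>2)}" using f g f2 g2 by blast
  show "bdd_above {corr M f g | f g.
      f \<in> borel_measurable A \<and> integrable M (\<lambda>x. (f x)\<^sup>2) \<and>
      g \<in> borel_measurable B \<and> integrable M (\<lambda>x. (g x)\<^sup>2)}"
    by (rule bdd_aboveI[of _ 1]) (auto intro!: corr_le_1 dest: meas_sub[OF A] meas_sub[OF B])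
qed

lemma max_corr_le_1:
  assumes A: "space A = space M" "sets A \<subseteq> sets M" and B: "space B = space M" "sets B \<subseteq> sets M"
  shows "max_corr M A B \<le> 1"
  unfolding max_corr_def
proof (rule cSup_least)
  show "{corr M f g | f g.
      f \<in> borel_measurable A \<and> integrable M (\<lambda>x. (f x)\<^sup>2) \<and>
      g \<in> borel_measurable B \<and> integrable M (\<lambda>x. (g x)\<^sup>2)} \<noteq> {}"
  proof -
    have "corr M (\<lambda>x. 0) (\<lambda>x. 0) \<in> {corr M f g | f g.
      f \<in> borel_measurable A \<and> integrable M (\<lambda>x. (f x)\<^sup>2) \<and>
      g \<in> borel_measurable B \<and> integrable M (\<lambda>x. (g x)\<^sup>2)}"
      by (auto intro!: exI[of _ "\<lambda>x. 0::real"])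
    then show ?thesis by blast
  qed
qed (auto intro!: corr_le_1 dest: meas_sub[OF A] meas_sub[OF B])

end


lemma cs2: "x1 * y1 + x2 * y2 \<le> sqrt (x1\<^sup>2 + x2\<^sup>2) * sqrt (y1\<^sup>2 + y2\<^sup>2)"
proof -
  have "(x1 * y1 + x2 * y2)\<^sup>2 \<le> (x1\<^sup>2 + x2\<^sup>2) * (y1\<^sup>2 + y2\<^sup>2)"
  proof -
    have "0 \<le> (x1 * y2 - x2 * y1)\<^sup>2" by simp
    then show ?thesis by (simp add: power2_eq_square algebra_simps)
  qed
  then have "\<bar>x1 * y1 + x2 * y2\<bar> \<le> sqrt ((x1\<^sup>2 + x2\<^sup>2) * (y1\<^sup>2 + y2\<^sup>2))"
    by (simp add: real_le_rsqrt)
  then show ?thesis by (simp add: real_sqrt_mult)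
qed

lemma vecset_eq: "{w::'b^'n. \<forall>j. w$j \<in> I j} = vec_lambda ` (PiE UNIV I)"
proof
  show "{w::'b^'n. \<forall>j. w$j \<in> I j} \<subseteq> vec_lambda ` (PiE UNIV I)"
  proof
    fix w :: "'b^'n" assume "w \<in> {w. \<forall>j. w$j \<in> I j}"
    then have "(\<lambda>j. w$j) \<in> PiE UNIV I" by auto
    then show "w \<in> vec_lambda ` (PiE UNIV I)" by (metis image_eqI vec_lambda_eta)
  qed
qed auto

lemma card_vecset:
  fixes I :: "'n::finite \<Rightarrow> 'b set"
  shows "card {w::'b^'n. \<forall>j. w$j \<in> I j} = (\<Prod>j\<in>UNIV. card (I j))"
proof -
  have "inj_on vec_lambda (PiE UNIV I)" by (auto intro: inj_onI simp: vec_lambda_inject)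
  then have "card (vec_lambda ` (PiE UNIV I)) = card (PiE UNIV I)" by (rule card_image)
  then show ?thesis unfolding vecset_eq by (simp add: card_PiE)
qed

lemma finite_vecset:
  fixes I :: "'n::finite \<Rightarrow> 'b set"
  assumes "\<And>j. finite (I j)"
  shows "finite {w::'b^'n. \<forall>j. w$j \<in> I j}"
  unfolding vecset_eq using assms by (intro finite_imageI finite_PiE) auto

lemma box_eq: "box v = {w. \<forall>j. w$j \<in> {1..int (v$j)}}"
  unfolding box_def by auto

lemma card_box: "card (box v) = vol v"
  unfolding box_eq card_vecset vol_def by simp

lemma finite_box: "finite (box v)"
  unfolding box_eq by (rule finite_vecset) simp

definition cf :: "real^'d \<Rightarrow> int^'d \<Rightarrow> complex" where
  "cf \<mu> k = exp (- \<i> * complex_of_real (kdot k \<mu>))"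

definition ev :: "'d \<Rightarrow> int^'d" where
  "ev u = (\<chi> j. if j = u then 1 else 0)"

lemma partial_sum_cf: "partial_sum X v \<mu> x = (\<Sum>k\<in>box v. cf \<mu> k * X k x)"
  unfolding partial_sum_def cf_def ..

lemma cmod_cf: "cmod (cf \<mu> k) = 1"
  unfolding cf_def by (simp add: norm_exp_eq_Re)

lemma kdot_shift: "kdot (k + ev u) \<mu> = kdot k \<mu> + \<mu>$u"
proof -
  have "kdot (k + ev u) \<mu> = (\<Sum>j\<in>UNIV. real_of_int (k$j) * \<mu>$j + (if j = u then \<mu>$j else 0))"
    unfolding kdot_def ev_def by (intro sum.cong refl) (simp add: algebra_simps)
  also have "\<dots> = kdot k \<mu> + \<mu>$u"
    unfolding kdot_def sum.distrib by simp
  finally show ?thesis .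
qed

lemma cf_shift: "cf \<mu> (k + ev u) = cf \<mu> k * exp (- \<i> * complex_of_real (\<mu>$u))"
  unfolding cf_def kdot_shift by (simp add: algebra_simps exp_add[symmetric])

lemma symdiff_sum:
  fixes c :: "'i \<Rightarrow> complex"
  assumes "finite A" "finite B"
  shows "(\<Sum>k\<in>A. c k * Y k) - (\<Sum>k\<in>B. c k * Y k)
     = (\<Sum>k\<in>(A-B) \<union> (B-A). (if k \<in> A then c k else - c k) * Y k)"
proof -
  have a: "(\<Sum>k\<in>A. c k * Y k) = (\<Sum>k\<in>A-B. c k * Y k) + (\<Sum>k\<in>A\<inter>B. c k * Y k)"
  proof -
    have "A - (A \<inter> B) = A - B" by auto
    then show ?thesis using sum.subset_diff[of "A\<inter>B" A "\<lambda>k. c k * Y k"] assms by simp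
  qed
  have b: "(\<Sum>k\<in>B. c k * Y k) = (\<Sum>k\<in>B-A. c k * Y k) + (\<Sum>k\<in>A\<inter>B. c k * Y k)"
  proof -
    have "B - (A \<inter> B) = B - A" by auto
    then show ?thesis using sum.subset_diff[of "A\<inter>B" B "\<lambda>k. c k * Y k"] assms by simp
  qed
  have "(\<Sum>k\<in>(A-B) \<union> (B-A). (if k \<in> A then c k else - c k) * Y k)
      = (\<Sum>k\<in>A-B. (if k \<in> A then c k else - c k) * Y k) + (\<Sum>k\<in>B-A. (if k \<in> A then c k else - c k) * Y k)"
    using assms by (intro sum.union_disjoint) auto
  also have "\<dots> = (\<Sum>k\<in>A-B. c k * Y k) - (\<Sum>k\<in>B-A. c k * Y k)"
    by (simp add: sum_negf)
  finally show ?thesis using a b by simp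
qed

lemma prod_remove_if:
  fixes f :: "'n::finite \<Rightarrow> nat"
  shows "(\<Prod>j\<in>UNIV. if j = u then 1 else f j) * f u = (\<Prod>j\<in>UNIV. f j)"
proof -
  have "(\<Prod>j\<in>UNIV. f j) = f u * (\<Prod>j\<in>UNIV-{u}. f j)" by (simp add: prod.remove)
  moreover have "(\<Prod>j\<in>UNIV. if j = u then 1 else f j) = 1 * (\<Prod>j\<in>UNIV-{u}. if j = u then 1 else f j)"
    by (subst prod.remove[of _ u]) auto
  moreover have "(\<Prod>j\<in>UNIV-{u}. if j = u then 1 else f j) = (\<Prod>j\<in>UNIV-{u}. f j)"
    by (intro prod.cong) auto
  ultimately show ?thesis by simp
qed

lemma slice_card:
  fixes v :: "nat^'d"
  assumes "S \<subseteq> {w. \<forall>j. w$j \<in> (if j = u then {a} else {1..int (v$j)})}"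
  shows "card S * v$u \<le> vol v"
proof -
  have fin: "finite {w::int^'d. \<forall>j. w$j \<in> (if j = u then {a} else {1..int (v$j)})}"
    by (rule finite_vecset) simp
  have "card S \<le> card {w::int^'d. \<forall>j. w$j \<in> (if j = u then {a} else {1..int (v$j)})}"
    by (rule card_mono[OF fin assms])
  also have "\<dots> = (\<Prod>j\<in>UNIV. if j = u then 1 else v$j)"
    unfolding card_vecset by (intro prod.cong) auto
  finally have "card S * v$u \<le> (\<Prod>j\<in>UNIV. if j = u then 1 else v$j) * v$u" by simp
  also have "\<dots> = vol v" unfolding vol_def by (rule prod_remove_if)
  finally show ?thesis .
qed

locale fld = prob_space +
  fixes X :: "int^'d \<Rightarrow> 'a \<Rightarrow> complex"
  assumes meas: "\<And>k. X k \<in> borel_measurable M"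
    and sq: "\<And>k. integrable M (\<lambda>\<omega>. (cmod (X k \<omega>))\<^sup>2)"
    and centered: "\<And>k. (\<integral>\<omega>. X k \<omega> \<partial>M) = 0"
begin

definition G where "G S = (\<Union>k\<in>S. {X k -` A \<inter> space M | A. A \<in> sets borel})"

lemma G_sub: "G S \<subseteq> Pow (space M)" unfolding G_def by auto

lemma G_sets: "G S \<subseteq> sets M" unfolding G_def using meas by (auto intro: measurable_sets)

lemma sg_space: "space (sigma_gen M X S) = space M"
  unfolding sigma_gen_def G_def[symmetric] using G_sub by (rule space_measure_of)

lemma sg_sets: "sets (sigma_gen M X S) \<subseteq> sets M"
  unfolding sigma_gen_def G_def[symmetric] using G_sub G_sets
  by (simp add: sets_measure_of sets.sigma_sets_subset)

lemma sg_meas: "k \<in> S \<Longrightarrow> X k \<in> borel_measurable (sigma_gen M X S)"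
proof (rule measurableI)
  assume k: "k \<in> S"
  fix x assume "x \<in> space (sigma_gen M X S)" then show "X k x \<in> space borel" by simp
next
  fix A :: "complex set" assume k: "k \<in> S" and A: "A \<in> sets borel"
  have "X k -` A \<inter> space M \<in> G S" unfolding G_def using k A by blast
  then show "X k -` A \<inter> space (sigma_gen M X S) \<in> sets (sigma_gen M X S)"
    unfolding sg_space unfolding sigma_gen_def G_def[symmetric] using G_sub by auto
qed

lemma sqiX: "sqi M (X k)"
  unfolding sqi_def using meas sq by auto

lemma Xint: "integrable M (X k)"
proof (rule Bochner_Integration.integrable_bound[of _ "\<lambda>x. 1 + (cmod (X k x))\<^sup>2"])
  show "integrable M (\<lambda>x. 1 + (cmod (X k x))\<^sup>2)" using sq by auto
  show "X k \<in> borel_measurable M" by (rule meas)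
  show "AE x in M. norm (X k x) \<le> norm (1 + (cmod (X k x))\<^sup>2)"
  proof (rule AE_I2)
    fix x
    have "cmod (X k x) \<le> 1 + (cmod (X k x))\<^sup>2"
      by (smt (verit, best) power2_eq_square mult_le_cancel_left1 one_le_power zero_le_power2)
    then show "norm (X k x) \<le> norm (1 + (cmod (X k x))\<^sup>2)" by simp
  qed
qed

lemma rho_ge:
  assumes "finite S" "S \<noteq> {}" "finite T" "T \<noteq> {}" "\<forall>k\<in>S. \<forall>l\<in>T. int n \<le> \<bar>k$u - l$u\<bar>"
  shows "max_corr M (sigma_gen M X S) (sigma_gen M X T) \<le> rho' M X n"
  unfolding rho'_def
proof (rule cSup_upper)
  show "max_corr M (sigma_gen M X S) (sigma_gen M X T) \<in> {max_corr M (sigma_gen M X S) (sigma_gen M X T) | S T.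
      finite S \<and> S \<noteq> {} \<and> finite T \<and> T \<noteq> {} \<and>
      (\<exists>u. \<forall>k\<in>S. \<forall>l\<in>T. \<bar>k$u - l$u\<bar> \<ge> int n)}"
    using assms by blast
  show "bdd_above {max_corr M (sigma_gen M X S) (sigma_gen M X T) | S T.
      finite S \<and> S \<noteq> {} \<and> finite T \<and> T \<noteq> {} \<and>
      (\<exists>u. \<forall>k\<in>S. \<forall>l\<in>T. \<bar>k$u - l$u\<bar> \<ge> int n)}"
    by (rule bdd_aboveI[of _ 1]) (auto intro!: max_corr_le_1 sg_space sg_sets)
qed

lemma real_cov:
  fixes f g :: "'a \<Rightarrow> real"
  assumes "finite S" "S \<noteq> {}" "finite T" "T \<noteq> {}" "\<forall>k\<in>S. \<forall>l\<in>T. int n \<le> \<bar>k$u - l$u\<bar>"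
    and f: "f \<in> borel_measurable (sigma_gen M X S)" and g: "g \<in> borel_measurable (sigma_gen M X T)"
    and f2: "integrable M (\<lambda>x. (f x)\<^sup>2)" and g2: "integrable M (\<lambda>x. (g x)\<^sup>2)"
    and f0: "(\<integral>x. f x \<partial>M) = 0" and g0: "(\<integral>x. g x \<partial>M) = 0"
  shows "(\<integral>x. f x * g x \<partial>M) \<le> rho' M X n * (sqrt (\<integral>x. (f x)\<^sup>2 \<partial>M) * sqrt (\<integral>x. (g x)\<^sup>2 \<partial>M))"
proof -
  have fM: "f \<in> borel_measurable M" by (rule meas_sub[OF sg_space sg_sets f])
  have gM: "g \<in> borel_measurable M" by (rule meas_sub[OF sg_space sg_sets g])
  have c1: "corr M f g \<le> max_corr M (sigma_gen M X S) (sigma_gen M X T)"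
    by (rule max_corr_ge[OF sg_space sg_sets sg_space sg_sets f g f2 g2])
  have c2: "corr M f g \<le> rho' M X n" using c1 rho_ge[OF assms(1-5)] by linarith
  define D where "D = sqrt (\<integral>x. (f x)\<^sup>2 \<partial>M) * sqrt (\<integral>x. (g x)\<^sup>2 \<partial>M)"
  have cs: "(\<integral>x. f x * g x \<partial>M) \<le> D" unfolding D_def by (rule real_CS'[OF fM gM f2 g2])
  have D0: "0 \<le> D" unfolding D_def by (intro mult_nonneg_nonneg real_sqrt_ge_zero integral_nonneg) auto
  have cc: "corr M f g = (\<integral>x. f x * g x \<partial>M) / D"
    unfolding corr_def D_def f0 g0 by (simp add: real_sqrt_mult)
  show ?thesis
  proof (cases "D = 0")
    case True then show ?thesis using cs by (simp add: D_def[symmetric])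
  next
    case False
    then have "0 < D" using D0 by simp
    have "(\<integral>x. f x * g x \<partial>M) = corr M f g * D" using cc \<open>0 < D\<close> by simp
    also have "\<dots> \<le> rho' M X n * D" using c2 \<open>0 < D\<close> by (simp add: mult_right_mono)
    finally show ?thesis by (simp add: D_def)
  qed
qed


lemma sqi_lin: "sqi M (\<lambda>x. \<Sum>k\<in>A. c k * X k x)"
  by (intro sqi_sum sqi_cmult sqiX)

lemma int_lin: "(\<integral>x. (\<Sum>k\<in>A. c k * X k x) \<partial>M) = 0"
proof -
  have "(\<integral>x. (\<Sum>k\<in>A. c k * X k x) \<partial>M) = (\<Sum>k\<in>A. (\<integral>x. c k * X k x \<partial>M))"
    by (rule Bochner_Integration.integral_sum) (auto intro: Xint)
  also have "\<dots> = 0" by (simp add: centered)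
  finally show ?thesis .
qed

lemma int_lin_int: "integrable M (\<lambda>x. (\<Sum>k\<in>A. c k * X k x))"
  by (intro Bochner_Integration.integrable_sum integrable_mult_right Xint)

lemma lin_meas_gen: "(\<lambda>x. \<Sum>k\<in>A. c k * X k x) \<in> borel_measurable (sigma_gen M X A)"
proof -
  have "\<And>k. k \<in> A \<Longrightarrow> (\<lambda>x. c k * X k x) \<in> borel_measurable (sigma_gen M X A)"
    using sg_meas by measurable
  then show ?thesis by (rule borel_measurable_sum)
qed

lemma sq_parts:
  assumes "sqi M Y"
  shows "integrable M (\<lambda>x. (Re (Y x))\<^sup>2)" "integrable M (\<lambda>x. (Im (Y x))\<^sup>2)"
    "nrm M Y = (\<integral>x. (Re (Y x))\<^sup>2 \<partial>M) + (\<integral>x. (Im (Y x))\<^sup>2 \<partial>M)"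
proof -
  have Ym: "Y \<in> borel_measurable M" and Yi: "integrable M (\<lambda>x. (cmod (Y x))\<^sup>2)"
    using assms unfolding sqi_def by auto
  show i1: "integrable M (\<lambda>x. (Re (Y x))\<^sup>2)"
    by (rule Bochner_Integration.integrable_bound[OF Yi]) (use Ym in \<open>auto simp: cmod_power2\<close>)
  show i2: "integrable M (\<lambda>x. (Im (Y x))\<^sup>2)"
    by (rule Bochner_Integration.integrable_bound[OF Yi]) (use Ym in \<open>auto simp: cmod_power2\<close>)
  show "nrm M Y = (\<integral>x. (Re (Y x))\<^sup>2 \<partial>M) + (\<integral>x. (Im (Y x))\<^sup>2 \<partial>M)"
    unfolding nrm_def cmod_power2 using i1 i2 by simp
qed

lemma cov_bound:
  assumes A: "finite A" and B: "finite B" and sep: "\<forall>k\<in>A. \<forall>l\<in>B. int n \<le> \<bar>k$u - l$u\<bar>"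
    and r: "rho' M X n \<le> 1/2"
  shows "(\<integral>x. Re ((\<Sum>k\<in>A. c k * X k x) * cnj (\<Sum>k\<in>B. d k * X k x)) \<partial>M)
     \<le> 1/2 * sqrt (nrm M (\<lambda>x. \<Sum>k\<in>A. c k * X k x)) * sqrt (nrm M (\<lambda>x. \<Sum>k\<in>B. d k * X k x))"
proof (cases "A = {} \<or> B = {}")
  case True
  then show ?thesis by (auto intro!: mult_nonneg_nonneg simp: nrm_nonneg)
next
  case False
  define Y where "Y = (\<lambda>x. \<Sum>k\<in>A. c k * X k x)"
  define Z where "Z = (\<lambda>x. \<Sum>k\<in>B. d k * X k x)"
  have sY: "sqi M Y" and sZ: "sqi M Z" unfolding Y_def Z_def by (rule sqi_lin)+
  have YA: "Y \<in> borel_measurable (sigma_gen M X A)" unfolding Y_def by (rule lin_meas_gen)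
  have ZB: "Z \<in> borel_measurable (sigma_gen M X B)" unfolding Z_def by (rule lin_meas_gen)
  have YM: "Y \<in> borel_measurable M" and ZM: "Z \<in> borel_measurable M"
    using sY sZ unfolding sqi_def by auto
  note pY = sq_parts[OF sY] and pZ = sq_parts[OF sZ]
  have iY: "integrable M Y" unfolding Y_def by (rule int_lin_int)
  have iZ: "integrable M Z" unfolding Z_def by (rule int_lin_int)
  have ReY0: "(\<integral>x. Re (Y x) \<partial>M) = 0"
    using integral_bounded_linear[OF bounded_linear_Re iY] int_lin unfolding Y_def by simp
  have ImY0: "(\<integral>x. Im (Y x) \<partial>M) = 0"
    using integral_bounded_linear[OF bounded_linear_Im iY] int_lin unfolding Y_def by simp
  have ReZ0: "(\<integral>x. Re (Z x) \<partial>M) = 0"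
    using integral_bounded_linear[OF bounded_linear_Re iZ] int_lin unfolding Z_def by simp
  have ImZ0: "(\<integral>x. Im (Z x) \<partial>M) = 0"
    using integral_bounded_linear[OF bounded_linear_Im iZ] int_lin unfolding Z_def by simp
  have m1: "(\<lambda>x. Re (Y x)) \<in> borel_measurable (sigma_gen M X A)" using YA by measurable
  have m2: "(\<lambda>x. Im (Y x)) \<in> borel_measurable (sigma_gen M X A)" using YA by measurable
  have m3: "(\<lambda>x. Re (Z x)) \<in> borel_measurable (sigma_gen M X B)" using ZB by measurable
  have m4: "(\<lambda>x. Im (Z x)) \<in> borel_measurable (sigma_gen M X B)" using ZB by measurable
  have ne: "A \<noteq> {}" "B \<noteq> {}" using False by auto
  have c1: "(\<integral>x. Re (Y x) * Re (Z x) \<partial>M) \<le> rho' M X n * (sqrt (\<integral>x. (Re (Y x))\<^sup>2 \<partial>M) * sqrt (\<integral>x. (Re (Z x))\<^sup>2 \<partial>M))"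
    by (rule real_cov[OF A ne(1) B ne(2) sep m1 m3 pY(1) pZ(1) ReY0 ReZ0])
  have c2: "(\<integral>x. Im (Y x) * Im (Z x) \<partial>M) \<le> rho' M X n * (sqrt (\<integral>x. (Im (Y x))\<^sup>2 \<partial>M) * sqrt (\<integral>x. (Im (Z x))\<^sup>2 \<partial>M))"
    by (rule real_cov[OF A ne(1) B ne(2) sep m2 m4 pY(2) pZ(2) ImY0 ImZ0])
  define a1 where "a1 = sqrt (\<integral>x. (Re (Y x))\<^sup>2 \<partial>M)"
  define a2 where "a2 = sqrt (\<integral>x. (Im (Y x))\<^sup>2 \<partial>M)"
  define b1 where "b1 = sqrt (\<integral>x. (Re (Z x))\<^sup>2 \<partial>M)"
  define b2 where "b2 = sqrt (\<integral>x. (Im (Z x))\<^sup>2 \<partial>M)"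
  have nn: "0 \<le> a1" "0 \<le> a2" "0 \<le> b1" "0 \<le> b2" unfolding a1_def a2_def b1_def b2_def
    by (intro real_sqrt_ge_zero integral_nonneg; simp)+
  have c1': "(\<integral>x. Re (Y x) * Re (Z x) \<partial>M) \<le> 1/2 * (a1 * b1)"
    using c1 r mult_right_mono[OF r, of "a1*b1"] nn unfolding a1_def[symmetric] b1_def[symmetric] by simp
  have c2': "(\<integral>x. Im (Y x) * Im (Z x) \<partial>M) \<le> 1/2 * (a2 * b2)"
    using c2 r mult_right_mono[OF r, of "a2*b2"] nn unfolding a2_def[symmetric] b2_def[symmetric] by simp
  have i1: "integrable M (\<lambda>x. Re (Y x) * Re (Z x))"
    by (rule real_CS(1)) (use YM ZM pY pZ in auto)
  have i2: "integrable M (\<lambda>x. Im (Y x) * Im (Z x))"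
    by (rule real_CS(1)) (use YM ZM pY pZ in auto)
  have "(\<integral>x. Re (Y x * cnj (Z x)) \<partial>M) = (\<integral>x. Re (Y x) * Re (Z x) + Im (Y x) * Im (Z x) \<partial>M)"
    by simp
  also have "\<dots> = (\<integral>x. Re (Y x) * Re (Z x) \<partial>M) + (\<integral>x. Im (Y x) * Im (Z x) \<partial>M)"
    using i1 i2 by simp
  also have "\<dots> \<le> 1/2 * (a1 * b1 + a2 * b2)" using c1' c2' by simp
  also have "a1 * b1 + a2 * b2 \<le> sqrt (a1\<^sup>2 + a2\<^sup>2) * sqrt (b1\<^sup>2 + b2\<^sup>2)" by (rule cs2)
  also have "a1\<^sup>2 + a2\<^sup>2 = nrm M Y" unfolding pY(3) a1_def a2_def
    by (simp add: integral_nonneg)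
  also have "b1\<^sup>2 + b2\<^sup>2 = nrm M Z" unfolding pZ(3) b1_def b2_def
    by (simp add: integral_nonneg)
  finally show ?thesis unfolding Y_def Z_def by simp
qed


lemma regroup:
  assumes "finite F" "finite P"
  shows "(\<Sum>t\<in>P. (\<Sum>k\<in>{k\<in>F. k$u = t}. c k * X k x)) = (\<Sum>k\<in>{k\<in>F. k$u \<in> P}. c k * X k x)"
proof -
  have "(\<Sum>k\<in>{k\<in>F. k$u \<in> P}. c k * X k x) = (\<Sum>t\<in>P. (\<Sum>k\<in>{k. k \<in> {k\<in>F. k$u \<in> P} \<and> k$u = t}. c k * X k x))"
    by (rule sum.group[symmetric]) (use assms in auto)
  also have "\<dots> = (\<Sum>t\<in>P. (\<Sum>k\<in>{k\<in>F. k$u = t}. c k * X k x))"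
    by (intro sum.cong refl arg_cong[where f="\<lambda>S. sum _ S"]) auto
  finally show ?thesis by simp
qed

lemma coord_bound:
  assumes F: "finite F" and N: "N > 0" and r: "rho' M X N \<le> 1/2"
  shows "nrm M (\<lambda>x. \<Sum>k\<in>F. c k * X k x)
     \<le> 3 * real N * (\<Sum>t\<in>(\<lambda>k. k$u) ` F. nrm M (\<lambda>x. \<Sum>k\<in>{k\<in>F. k$u = t}. c k * X k x))"
proof -
  define T where "T = (\<lambda>k. k$u) ` F"
  define W where "W t = (\<lambda>x. \<Sum>k\<in>{k\<in>F. k$u = t}. c k * X k x)" for t
  define R where "R = {0..<int N}"
  define Tj where "Tj j = {t\<in>T. t mod int N = j}" for j
  have fT: "finite T" unfolding T_def using F by simp
  have fR: "finite R" unfolding R_def by simp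
  have cR: "card R = N" unfolding R_def by simp
  have sW: "sqi M (W t)" for t unfolding W_def by (rule sqi_lin)
  have s1: "(\<lambda>x. \<Sum>k\<in>F. c k * X k x) = (\<lambda>x. \<Sum>t\<in>T. W t x)"
    unfolding W_def T_def by (intro ext sum.group[symmetric]) (use F in auto)
  have s2: "(\<lambda>x. \<Sum>t\<in>T. W t x) = (\<lambda>x. \<Sum>j\<in>R. \<Sum>t\<in>Tj j. W t x)"
    unfolding Tj_def R_def
    by (intro ext sum.group[symmetric]) (use fT N in auto)
  have each: "nrm M (\<lambda>x. \<Sum>t\<in>Tj j. W t x) \<le> 3 * (\<Sum>t\<in>Tj j. nrm M (W t))" for j
  proof (rule avg_bound)
    show fTj: "finite (Tj j)" unfolding Tj_def using fT by simp
    show "sqi M (W t)" for t by (rule sW)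
    fix P assume PT: "P \<subseteq> Tj j"
    have fP: "finite P" using PT fTj finite_subset by auto
    have fD: "finite (Tj j - P)" using fTj by simp
    have e1: "(\<Sum>t\<in>P. W t x) = (\<Sum>k\<in>{k\<in>F. k$u \<in> P}. c k * X k x)" for x
      unfolding W_def by (rule regroup[OF F fP])
    have e2: "(\<Sum>t\<in>Tj j - P. W t x) = (\<Sum>k\<in>{k\<in>F. k$u \<in> Tj j - P}. c k * X k x)" for x
      unfolding W_def by (rule regroup[OF F fD])
    have sep: "\<forall>k\<in>{k\<in>F. k$u \<in> P}. \<forall>l\<in>{k\<in>F. k$u \<in> Tj j - P}. int N \<le> \<bar>k$u - l$u\<bar>"
    proof (intro ballI)
      fix k l assume k: "k \<in> {k\<in>F. k$u \<in> P}" and l: "l \<in> {k\<in>F. k$u \<in> Tj j - P}"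
      have "k$u mod int N = l$u mod int N" "k$u \<noteq> l$u" using k l PT unfolding Tj_def by auto
      then have "int N dvd (k$u - l$u)" "k$u - l$u \<noteq> 0" by (auto simp: mod_eq_dvd_iff)
      then have "\<bar>int N\<bar> \<le> \<bar>k$u - l$u\<bar>" by (intro dvd_imp_le_int)
      then show "int N \<le> \<bar>k$u - l$u\<bar>" by simp
    qed
    show "(\<integral>x. Re ((\<Sum>t\<in>P. W t x) * cnj (\<Sum>t\<in>Tj j - P. W t x)) \<partial>M)
      \<le> 1 / 2 * sqrt (nrm M (\<lambda>x. \<Sum>t\<in>P. W t x)) * sqrt (nrm M (\<lambda>x. \<Sum>t\<in>Tj j - P. W t x))"
      unfolding e1 e2 by (rule cov_bound[OF _ _ sep r]) (use F in auto)
  qed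
  have "nrm M (\<lambda>x. \<Sum>k\<in>F. c k * X k x) = nrm M (\<lambda>x. \<Sum>j\<in>R. \<Sum>t\<in>Tj j. W t x)"
    unfolding s1 s2 ..
  also have "\<dots> \<le> real (card R) * (\<Sum>j\<in>R. nrm M (\<lambda>x. \<Sum>t\<in>Tj j. W t x))"
    by (rule nrm_sum_le) (intro sqi_sum sW)
  also have "\<dots> \<le> real (card R) * (\<Sum>j\<in>R. 3 * (\<Sum>t\<in>Tj j. nrm M (W t)))"
    by (intro mult_left_mono sum_mono each) auto
  also have "(\<Sum>j\<in>R. 3 * (\<Sum>t\<in>Tj j. nrm M (W t))) = 3 * (\<Sum>t\<in>T. nrm M (W t))"
    unfolding sum_distrib_left[symmetric] Tj_def R_def
    by (subst sum.group) (use fT N in auto)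
  finally show ?thesis unfolding cR T_def W_def by simp
qed


lemma nrm_cmult: "nrm M (\<lambda>x. a * f x) = (cmod a)\<^sup>2 * nrm M f"
  unfolding nrm_def by (simp add: norm_mult power_mult_distrib)

lemma flat_bound:
  assumes N: "N > 0" and r: "rho' M X N \<le> 1/2" and sig: "\<And>k. nrm M (X k) = s"
    and J: "finite J"
  shows "\<forall>F c. finite F \<longrightarrow> (\<forall>k\<in>F. cmod (c k) \<le> 1) \<longrightarrow> (\<forall>k\<in>F. \<forall>l\<in>F. \<forall>j. j \<notin> J \<longrightarrow> k$j = l$j)
     \<longrightarrow> nrm M (\<lambda>x. \<Sum>k\<in>F. c k * X k x) \<le> (3 * real N) ^ card J * s * real (card F)"
  using J
proof (induction J rule: finite_induct)
  case empty
  show ?case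
  proof (intro allI impI)
    fix F :: "(int^'d) set" and c :: "int^'d \<Rightarrow> complex"
    assume fF: "finite F" and c: "\<forall>k\<in>F. cmod (c k) \<le> 1"
      and fl: "\<forall>k\<in>F. \<forall>l\<in>F. \<forall>j. j \<notin> {} \<longrightarrow> k$j = l$j"
    show "nrm M (\<lambda>x. \<Sum>k\<in>F. c k * X k x) \<le> (3 * real N) ^ card {} * s * real (card F)"
    proof (cases "F = {}")
      case True then show ?thesis by (simp add: nrm_zero)
    next
      case False
      then obtain k where k: "k \<in> F" by auto
      have "\<forall>l\<in>F. l = k"
      proof
        fix l assume "l \<in> F"
        then have "\<forall>j. l$j = k$j" using fl k by blast
        then show "l = k" by (simp add: vec_eq_iff)
      qed
      then have "F = {k}" using k by blast
      have s0: "0 \<le> s" using sig[of k] nrm_nonneg[of M "X k"] by simp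
      have "nrm M (\<lambda>x. \<Sum>k\<in>F. c k * X k x) = (cmod (c k))\<^sup>2 * s"
        unfolding \<open>F = {k}\<close> by (simp add: nrm_cmult sig)
      also have "\<dots> \<le> 1 * s" using c k s0 by (intro mult_right_mono) (auto simp: power_le_one)
      finally show ?thesis using \<open>F = {k}\<close> by simp
    qed
  qed
next
  case (insert u J)
  show ?case
  proof (intro allI impI)
    fix F :: "(int^'d) set" and c :: "int^'d \<Rightarrow> complex"
    assume fF: "finite F" and c: "\<forall>k\<in>F. cmod (c k) \<le> 1"
      and fl: "\<forall>k\<in>F. \<forall>l\<in>F. \<forall>j. j \<notin> insert u J \<longrightarrow> k$j = l$j"
    define K where "K = (3 * real N) ^ card J * s"
    have "nrm M (\<lambda>x. \<Sum>k\<in>F. c k * X k x)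
       \<le> 3 * real N * (\<Sum>t\<in>(\<lambda>k. k$u) ` F. nrm M (\<lambda>x. \<Sum>k\<in>{k\<in>F. k$u = t}. c k * X k x))"
      by (rule coord_bound[OF fF N r])
    also have "\<dots> \<le> 3 * real N * (\<Sum>t\<in>(\<lambda>k. k$u) ` F. K * real (card {k\<in>F. k$u = t}))"
    proof (intro mult_left_mono sum_mono)
      fix t
      have "finite {k\<in>F. k$u = t}" using fF by simp
      moreover have "\<forall>k\<in>{k\<in>F. k$u = t}. cmod (c k) \<le> 1" using c by simp
      moreover have "\<forall>k\<in>{k\<in>F. k$u = t}. \<forall>l\<in>{k\<in>F. k$u = t}. \<forall>j. j \<notin> J \<longrightarrow> k$j = l$j"
      proof (intro ballI allI impI)
        fix k l j assume k: "k \<in> {k\<in>F. k$u = t}" and l: "l \<in> {k\<in>F. k$u = t}" and j: "j \<notin> J"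
        show "k$j = l$j"
        proof (cases "j = u")
          case True then show ?thesis using k l by simp
        next
          case False then have "j \<notin> insert u J" using j by simp
          then show ?thesis using fl k l by blast
        qed
      qed
      ultimately show "nrm M (\<lambda>x. \<Sum>k\<in>{k\<in>F. k$u = t}. c k * X k x) \<le> K * real (card {k\<in>F. k$u = t})"
        using insert.IH unfolding K_def by blast
    qed simp
    also have "(\<Sum>t\<in>(\<lambda>k. k$u) ` F. K * real (card {k\<in>F. k$u = t})) = K * real (card F)"
    proof -
      have "(\<Sum>t\<in>(\<lambda>k. k$u) ` F. real (card {k\<in>F. k$u = t})) = (\<Sum>t\<in>(\<lambda>k. k$u) ` F. (\<Sum>k\<in>{k\<in>F. k$u = t}. 1::real))"
        by simp
      also have "\<dots> = (\<Sum>k\<in>F. 1::real)"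
        by (rule sum.group) (use fF in auto)
      finally show ?thesis by (simp add: sum_distrib_left[symmetric])
    qed
    finally show "nrm M (\<lambda>x. \<Sum>k\<in>F. c k * X k x) \<le> (3 * real N) ^ card (insert u J) * s * real (card F)"
      using insert.hyps unfolding K_def by (simp add: algebra_simps)
  qed
qed

lemma field_bound:
  assumes N: "N > 0" and r: "rho' M X N \<le> 1/2" and sig: "\<And>k. nrm M (X k) = s"
    and F: "finite F" and c: "\<forall>k\<in>F. cmod (c k) \<le> 1"
  shows "nrm M (\<lambda>x. \<Sum>k\<in>F. c k * X k x) \<le> (3 * real N) ^ CARD('d) * s * real (card F)"
proof -
  have fU: "finite (UNIV::'d set)" by simp
  show ?thesis using flat_bound[OF N r sig fU, rule_format, OF F c[rule_format]] by simp
qed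


lemma int_prod_expand:
  assumes "finite A" "finite B"
  shows "(\<integral>x. (\<Sum>k\<in>A. a k * X k x) * (\<Sum>j\<in>B. b j * X j x) \<partial>M)
       = (\<Sum>k\<in>A. \<Sum>j\<in>B. a k * b j * (\<integral>x. X k x * X j x \<partial>M))"
proof -
  have ii: "integrable M (\<lambda>x. X k x * X j x)" for k j by (rule sqi_mult_int[OF sqiX sqiX])
  have "(\<lambda>x. (\<Sum>k\<in>A. a k * X k x) * (\<Sum>j\<in>B. b j * X j x))
      = (\<lambda>x. \<Sum>k\<in>A. \<Sum>j\<in>B. a k * b j * (X k x * X j x))"
    by (simp add: sum_product algebra_simps)
  then have "(\<integral>x. (\<Sum>k\<in>A. a k * X k x) * (\<Sum>j\<in>B. b j * X j x) \<partial>M)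
      = (\<integral>x. (\<Sum>k\<in>A. \<Sum>j\<in>B. a k * b j * (X k x * X j x)) \<partial>M)" by simp
  also have "\<dots> = (\<Sum>k\<in>A. (\<integral>x. (\<Sum>j\<in>B. a k * b j * (X k x * X j x)) \<partial>M))"
    by (rule Bochner_Integration.integral_sum)
       (intro Bochner_Integration.integrable_sum integrable_mult_right ii)
  also have "\<dots> = (\<Sum>k\<in>A. \<Sum>j\<in>B. (\<integral>x. a k * b j * (X k x * X j x) \<partial>M))"
    by (intro sum.cong refl Bochner_Integration.integral_sum) (intro integrable_mult_right ii)
  also have "\<dots> = (\<Sum>k\<in>A. \<Sum>j\<in>B. a k * b j * (\<integral>x. X k x * X j x \<partial>M))"
    by simp
  finally show ?thesis .
qed

lemma shift_cov:
  assumes stat: "\<And>k j. (\<integral>\<omega>. X k \<omega> * X j \<omega> \<partial>M) = (\<integral>\<omega>. X (k - j) \<omega> * X 0 \<omega> \<partial>M)"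
    and B: "finite B"
  shows "(\<integral>x. (\<Sum>k\<in>(\<lambda>k. k + ev u) ` B. cf \<mu>1 k * X k x) * (\<Sum>j\<in>(\<lambda>k. k + ev u) ` B. cf \<mu>2 j * X j x) \<partial>M)
     = exp (- \<i> * complex_of_real (\<mu>1$u + \<mu>2$u)) *
       (\<integral>x. (\<Sum>k\<in>B. cf \<mu>1 k * X k x) * (\<Sum>j\<in>B. cf \<mu>2 j * X j x) \<partial>M)"
proof -
  have inj: "inj_on (\<lambda>k. k + ev u) B" by (auto intro: inj_onI)
  have st: "(\<integral>x. X (k + ev u) x * X (j + ev u) x \<partial>M) = (\<integral>x. X k x * X j x \<partial>M)" for k j
    using stat[of "k + ev u" "j + ev u"] stat[of k j] by simp
  have ex: "exp (- \<i> * complex_of_real (\<mu>1$u + \<mu>2$u)) = exp (- \<i> * complex_of_real (\<mu>1$u)) * exp (- \<i> * complex_of_real (\<mu>2$u))"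
    by (simp add: algebra_simps exp_add[symmetric])
  have "(\<integral>x. (\<Sum>k\<in>(\<lambda>k. k + ev u) ` B. cf \<mu>1 k * X k x) * (\<Sum>j\<in>(\<lambda>k. k + ev u) ` B. cf \<mu>2 j * X j x) \<partial>M)
     = (\<Sum>k\<in>(\<lambda>k. k + ev u) ` B. \<Sum>j\<in>(\<lambda>k. k + ev u) ` B. cf \<mu>1 k * cf \<mu>2 j * (\<integral>x. X k x * X j x \<partial>M))"
    using B by (intro int_prod_expand) auto
  also have "\<dots> = (\<Sum>k\<in>B. \<Sum>j\<in>B. cf \<mu>1 (k + ev u) * cf \<mu>2 (j + ev u) * (\<integral>x. X (k + ev u) x * X (j + ev u) x \<partial>M))"
    by (simp add: sum.reindex[OF inj])
  also have "\<dots> = (\<Sum>k\<in>B. \<Sum>j\<in>B. exp (- \<i> * complex_of_real (\<mu>1$u + \<mu>2$u)) * (cf \<mu>1 k * cf \<mu>2 j * (\<integral>x. X k x * X j x \<partial>M)))"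
    unfolding st cf_shift ex by (simp add: algebra_simps)
  also have "\<dots> = exp (- \<i> * complex_of_real (\<mu>1$u + \<mu>2$u)) * (\<Sum>k\<in>B. \<Sum>j\<in>B. cf \<mu>1 k * cf \<mu>2 j * (\<integral>x. X k x * X j x \<partial>M))"
    by (simp add: sum_distrib_left)
  also have "(\<Sum>k\<in>B. \<Sum>j\<in>B. cf \<mu>1 k * cf \<mu>2 j * (\<integral>x. X k x * X j x \<partial>M))
     = (\<integral>x. (\<Sum>k\<in>B. cf \<mu>1 k * X k x) * (\<Sum>j\<in>B. cf \<mu>2 j * X j x) \<partial>M)"
    using B by (intro int_prod_expand[symmetric]) auto
  finally show ?thesis .
qed


lemma main_est:
  fixes v :: "nat^'d"
  assumes N: "N > 0" and r: "rho' M X N \<le> 1/2" and sig: "\<And>k. nrm M (X k) = s"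
    and stat: "\<And>k j. (\<integral>\<omega>. X k \<omega> * X j \<omega> \<partial>M) = (\<integral>\<omega>. X (k - j) \<omega> * X 0 \<omega> \<partial>M)"
    and vpos: "\<And>j. 1 \<le> v$j"
  shows "cmod (exp (- \<i> * complex_of_real (\<mu>1$u + \<mu>2$u)) - 1) *
         cmod (\<integral>x. partial_sum X v \<mu>1 x * partial_sum X v \<mu>2 x \<partial>M)
     \<le> 2 * ((3 * real N) ^ CARD('d) * s) * real (vol v) * sqrt (2 / real (v$u))"
proof -
  define B where "B = box v"
  define B' where "B' = (\<lambda>k. k + ev u) ` B"
  define C where "C = (3 * real N) ^ CARD('d) * s"
  define V where "V = real (vol v)"
  define Sd where "Sd = (B' - B) \<union> (B - B')"
  define T where "T \<mu> = (\<lambda>x. \<Sum>k\<in>B. cf \<mu> k * X k x)" for \<mu>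
  define T' where "T' \<mu> = (\<lambda>x. \<Sum>k\<in>B'. cf \<mu> k * X k x)" for \<mu>
  define D where "D \<mu> = (\<lambda>x. \<Sum>k\<in>Sd. (if k \<in> B' then cf \<mu> k else - cf \<mu> k) * X k x)" for \<mu>
  have fB: "finite B" unfolding B_def by (rule finite_box)
  have fB': "finite B'" unfolding B'_def using fB by simp
  have fSd: "finite Sd" unfolding Sd_def using fB fB' by simp
  have s0: "0 \<le> s" using sig[of 0] nrm_nonneg[of M "X 0"] by simp
  have C0: "0 \<le> C" unfolding C_def using s0 by simp
  have V0: "0 \<le> V" unfolding V_def by simp
  have inj: "inj_on (\<lambda>k. k + ev u) B" by (auto intro: inj_onI)
  have cB: "card B = vol v" unfolding B_def by (rule card_box)
  have cB': "card B' = vol v" unfolding B'_def using card_image[OF inj] cB by simp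
  have sT: "sqi M (T \<mu>)" "sqi M (T' \<mu>)" "sqi M (D \<mu>)" for \<mu>
    unfolding T_def T'_def D_def by (rule sqi_lin)+
  have nT: "nrm M (T \<mu>) \<le> C * V" for \<mu>
    using field_bound[OF N r sig fB, of "cf \<mu>"] unfolding T_def C_def V_def cB by (simp add: cmod_cf)
  have nT': "nrm M (T' \<mu>) \<le> C * V" for \<mu>
    using field_bound[OF N r sig fB', of "cf \<mu>"] unfolding T'_def C_def V_def cB' by (simp add: cmod_cf)
  have nD: "nrm M (D \<mu>) \<le> C * real (card Sd)" for \<mu>
    using field_bound[OF N r sig fSd, of "\<lambda>k. if k \<in> B' then cf \<mu> k else - cf \<mu> k"]
    unfolding D_def C_def by (simp add: cmod_cf)
  have dT: "T' \<mu> x = T \<mu> x + D \<mu> x" for \<mu> x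
    using symdiff_sum[OF fB' fB, of "cf \<mu>" "\<lambda>k. X k x"] unfolding T_def T'_def D_def Sd_def
    by (simp add: algebra_simps)
  have lo: "card (B - B') * v$u \<le> vol v"
  proof (rule slice_card[where a=1])
    show "B - B' \<subseteq> {w. \<forall>j. w$j \<in> (if j = u then {1} else {1..int (v$j)})}"
    proof
      fix k assume k: "k \<in> B - B'"
      then have kB: "\<forall>j. 1 \<le> k$j \<and> k$j \<le> int (v$j)" unfolding B_def box_def by auto
      have "k$u = 1"
      proof (rule ccontr)
        assume "k$u \<noteq> 1"
        moreover have "1 \<le> k$u" using kB by blast
        ultimately have "2 \<le> k$u" by linarith
        define m where "m = k - ev u"
        have ku: "k$u \<le> int (v$u)" using kB by blast
        have "m \<in> B" unfolding B_def box_def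
        proof (intro CollectI allI conjI)
          fix j
          show "1 \<le> m$j"
            using kB \<open>2 \<le> k$u\<close> unfolding m_def ev_def by (cases "j = u") auto
          have "k$j \<le> int (v$j)" using kB by blast
          then show "m$j \<le> int (v$j)" unfolding m_def ev_def by (cases "j = u") auto
        qed
        moreover have "k = m + ev u" unfolding m_def by simp
        ultimately have "k \<in> B'" unfolding B'_def by blast
        then show False using k by simp
      qed
      then show "k \<in> {w. \<forall>j. w$j \<in> (if j = u then {1} else {1..int (v$j)})}" using kB by auto
    qed
  qed
  have hi: "card (B' - B) * v$u \<le> vol v"
  proof (rule slice_card[where a="int (v$u) + 1"])
    show "B' - B \<subseteq> {w. \<forall>j. w$j \<in> (if j = u then {int (v$u) + 1} else {1..int (v$j)})}"
    proof
      fix k assume k: "k \<in> B' - B"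
      then obtain m where m: "m \<in> B" "k = m + ev u" unfolding B'_def by auto
      then have mB: "\<forall>j. 1 \<le> m$j \<and> m$j \<le> int (v$j)" unfolding B_def box_def by auto
      have kj: "\<forall>j. j \<noteq> u \<longrightarrow> k$j = m$j" "k$u = m$u + 1" using m(2) unfolding ev_def by auto
      have "k$u = int (v$u) + 1"
      proof (rule ccontr)
        assume "k$u \<noteq> int (v$u) + 1"
        moreover have "m$u \<le> int (v$u)" using mB by blast
        ultimately have ku: "k$u \<le> int (v$u)" using kj(2) by linarith
        have "k \<in> B" unfolding B_def box_def
        proof (intro CollectI allI conjI)
          fix j
          have "1 \<le> m$j" "m$j \<le> int (v$j)" using mB by auto
          then show "1 \<le> k$j" "k$j \<le> int (v$j)" using kj ku by (cases "j = u"; simp)+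
        qed
        then show False using k by simp
      qed
      then show "k \<in> {w. \<forall>j. w$j \<in> (if j = u then {int (v$u) + 1} else {1..int (v$j)})}"
        using kj mB by auto
    qed
  qed
  have cSd: "real (card Sd) * real (v$u) \<le> 2 * V"
  proof -
    have "card Sd \<le> card (B' - B) + card (B - B')" unfolding Sd_def by (rule card_Un_le)
    then have "card Sd * v$u \<le> card (B' - B) * v$u + card (B - B') * v$u"
      by (metis add_mult_distrib mult_le_mono1)
    also have "\<dots> \<le> 2 * vol v" using lo hi by simp
    finally have "card Sd * v$u \<le> 2 * vol v" .
    then have "real (card Sd * v$u) \<le> real (2 * vol v)" by (simp only: of_nat_le_iff)
    then show ?thesis unfolding V_def by simp
  qed
  define a where "a = (\<integral>x. T \<mu>1 x * T \<mu>2 x \<partial>M)"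
  define E where "E = exp (- \<i> * complex_of_real (\<mu>1$u + \<mu>2$u))"
  have sh: "(\<integral>x. T' \<mu>1 x * T' \<mu>2 x \<partial>M) = E * a"
    unfolding T'_def T_def B'_def a_def E_def using shift_cov[OF stat fB] .
  have pw: "T' \<mu>1 x * T' \<mu>2 x - T \<mu>1 x * T \<mu>2 x = D \<mu>1 x * T' \<mu>2 x + T \<mu>1 x * D \<mu>2 x" for x
    unfolding dT by (simp add: algebra_simps)
  have "E * a - a = (\<integral>x. T' \<mu>1 x * T' \<mu>2 x \<partial>M) - (\<integral>x. T \<mu>1 x * T \<mu>2 x \<partial>M)"
    using sh a_def by simp
  also have "\<dots> = (\<integral>x. T' \<mu>1 x * T' \<mu>2 x - T \<mu>1 x * T \<mu>2 x \<partial>M)"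
    by (rule Bochner_Integration.integral_diff[symmetric]) (intro sqi_mult_int sT)+
  also have "\<dots> = (\<integral>x. D \<mu>1 x * T' \<mu>2 x + T \<mu>1 x * D \<mu>2 x \<partial>M)" unfolding pw ..
  also have "\<dots> = (\<integral>x. D \<mu>1 x * T' \<mu>2 x \<partial>M) + (\<integral>x. T \<mu>1 x * D \<mu>2 x \<partial>M)"
    by (rule Bochner_Integration.integral_add) (intro sqi_mult_int sT)+
  finally have id: "E * a - a = (\<integral>x. D \<mu>1 x * T' \<mu>2 x \<partial>M) + (\<integral>x. T \<mu>1 x * D \<mu>2 x \<partial>M)" .
  have "cmod (E - 1) * cmod a = cmod (E * a - a)" by (simp add: norm_mult[symmetric] algebra_simps)
  also have "\<dots> \<le> cmod (\<integral>x. D \<mu>1 x * T' \<mu>2 x \<partial>M) + cmod (\<integral>x. T \<mu>1 x * D \<mu>2 x \<partial>M)"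
    unfolding id by (rule norm_triangle_ineq)
  also have "\<dots> \<le> sqrt (nrm M (D \<mu>1)) * sqrt (nrm M (T' \<mu>2)) + sqrt (nrm M (T \<mu>1)) * sqrt (nrm M (D \<mu>2))"
    by (intro add_mono cplx_CS sT)
  also have "\<dots> \<le> sqrt (C * real (card Sd)) * sqrt (C * V) + sqrt (C * V) * sqrt (C * real (card Sd))"
    by (intro add_mono mult_mono real_sqrt_le_mono nD nT nT') (auto simp: nrm_nonneg C0 V0)
  also have "\<dots> = 2 * C * sqrt (real (card Sd) * V)"
    using C0 by (simp add: real_sqrt_mult algebra_simps)
  also have "\<dots> \<le> 2 * C * (V * sqrt (2 / real (v$u)))"
  proof (intro mult_left_mono)
    have vu: "0 < real (v$u)" using vpos[of u] by simp
    have "real (card Sd) * V \<le> V\<^sup>2 * (2 / real (v$u))"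
    proof -
      have "real (card Sd) \<le> 2 * V / real (v$u)" using cSd vu by (simp add: field_simps)
      then have "real (card Sd) * V \<le> 2 * V / real (v$u) * V" using V0 by (intro mult_right_mono) auto
      then show ?thesis by (simp add: power2_eq_square field_simps)
    qed
    then have "sqrt (real (card Sd) * V) \<le> sqrt (V\<^sup>2 * (2 / real (v$u)))" by (rule real_sqrt_le_mono)
    also have "\<dots> = sqrt (V\<^sup>2) * sqrt (2 / real (v$u))" by (rule real_sqrt_mult)
    also have "\<dots> = V * sqrt (2 / real (v$u))" using V0 by simp
    finally show "sqrt (real (card Sd) * V) \<le> V * sqrt (2 / real (v$u))" .
  qed (use C0 in auto)
  finally show ?thesis
    unfolding E_def a_def T_def B_def C_def V_def partial_sum_cf by (simp add: algebra_simps)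
qed

end

theorem lemma2p2:
  fixes M :: "'a measure" and X :: "int^'d \<Rightarrow> 'a \<Rightarrow> complex"
    and lam :: "real^'d" and lam1 lam2 :: "nat \<Rightarrow> real^'d" and v :: "nat \<Rightarrow> nat^'d"
  assumes "prob_space M"
    and meas: "\<And>k. X k \<in> borel_measurable M"
    and sq: "\<And>k. integrable M (\<lambda>\<omega>. (cmod (X k \<omega>))\<^sup>2)"
    and sq_eq: "\<And>k. (\<integral>\<omega>. (cmod (X k \<omega>))\<^sup>2 \<partial>M) = (\<integral>\<omega>. (cmod (X 0 \<omega>))\<^sup>2 \<partial>M)"
    and centered: "\<And>k. (\<integral>\<omega>. X k \<omega> \<partial>M) = 0"
    and mixing: "(\<lambda>n. rho' M X n) \<longlonglongrightarrow> 0"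
    and stat: "\<And>k j. (\<integral>\<omega>. X k \<omega> * X j \<omega> \<partial>M) = (\<integral>\<omega>. X (k - j) \<omega> * X 0 \<omega> \<partial>M)"
    and lam_box: "\<forall>j. - pi < lam$j \<and> lam$j \<le> pi"
    and lam_P: "\<exists>j. lam$j \<notin> {- pi, 0, pi}"
    and lam1_box: "\<And>n. \<forall>j. - pi < lam1 n $ j \<and> lam1 n $ j \<le> pi"
    and lam2_box: "\<And>n. \<forall>j. - pi < lam2 n $ j \<and> lam2 n $ j \<le> pi"
    and lam1_lim: "lam1 \<longlonglongrightarrow> lam"
    and lam2_lim: "lam2 \<longlonglongrightarrow> lam"
    and v_pos: "\<And>n j. 1 \<le> v n $ j"
    and v_lim: "filterlim (\<lambda>n. Min (range (\<lambda>j. v n $ j))) at_top sequentially"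
  shows "(\<lambda>n. \<integral>\<omega>. partial_sum X (v n) (lam1 n) \<omega> * partial_sum X (v n) (lam2 n) \<omega>
                    / of_nat (vol (v n)) \<partial>M) \<longlonglongrightarrow> 0"
proof -
  have fl: "fld M X" unfolding fld_def fld_axioms_def using assms(1) meas sq centered by auto
  interpret fld M X by (rule fl)
  have "\<forall>\<^sub>F n in sequentially. rho' M X n < 1/2"
    using order_tendstoD(2)[OF mixing, of "1/2"] by simp
  then obtain N0 where N0: "\<And>n. n \<ge> N0 \<Longrightarrow> rho' M X n < 1/2" unfolding eventually_sequentially by auto
  define N where "N = Suc N0"
  have N: "N > 0" and r: "rho' M X N \<le> 1/2" using N0[of N] unfolding N_def by auto
  define s where "s = nrm M (X 0)"
  have sig: "nrm M (X k) = s" for k unfolding s_def nrm_def by (rule sq_eq)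
  have s0: "0 \<le> s" unfolding s_def by (rule nrm_nonneg)
  define C where "C = (3 * real N) ^ CARD('d) * s"
  have C0: "0 \<le> C" unfolding C_def using s0 by simp
  obtain u where u: "lam$u \<notin> {- pi, 0, pi}" using lam_P by auto
  define \<delta> where "\<delta> = cmod (exp (- \<i> * complex_of_real (lam$u + lam$u)) - 1)"
  have \<delta>: "\<delta> > 0"
  proof (rule ccontr)
    assume "\<not> \<delta> > 0"
    then have "exp (- \<i> * complex_of_real (lam$u + lam$u)) = 1" unfolding \<delta>_def by simp
    then obtain n :: int where n: "- (lam$u + lam$u) = of_int (2 * n) * pi" unfolding exp_eq_1 by auto
    then have l: "lam$u = - of_int n * pi" by (simp add: algebra_simps)
    have b: "- pi < lam$u" "lam$u \<le> pi" using lam_box by auto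
    have h1: "(-1) * pi < (- real_of_int n) * pi" using b(1) l by simp
    have h2: "(- real_of_int n) * pi \<le> 1 * pi" using b(2) l by simp
    have "- 1 < - real_of_int n" by (rule mult_right_less_imp_less[OF h1]) simp
    moreover have "- real_of_int n \<le> 1" by (rule mult_right_le_imp_le[OF h2]) simp
    ultimately have "n = 0 \<or> n = -1" by linarith
    then show False using u l by auto
  qed
  define g where "g n = cmod (exp (- \<i> * complex_of_real (lam1 n $ u + lam2 n $ u)) - 1)" for n
  have "g \<longlonglongrightarrow> \<delta>" unfolding g_def \<delta>_def
    by (intro tendsto_intros lam1_lim lam2_lim)
  then have evg: "\<forall>\<^sub>F n in sequentially. \<delta>/2 < g n" using \<delta> by (intro order_tendstoD(1)) auto
  have vu: "filterlim (\<lambda>n. v n $ u) at_top sequentially"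
  proof (rule filterlim_at_top_mono[OF v_lim])
    show "\<forall>\<^sub>F n in sequentially. Min (range (\<lambda>j. v n $ j)) \<le> v n $ u"
      by (intro always_eventually allI Min_le) auto
  qed
  have vr: "filterlim (\<lambda>n. real (v n $ u)) at_top sequentially"
    by (rule filterlim_compose[OF filterlim_real_sequentially vu])
  have b0: "(\<lambda>n. 4 * C * sqrt (2 / real (v n $ u)) / \<delta>) \<longlonglongrightarrow> 0"
  proof -
    have "(\<lambda>n. 2 / real (v n $ u)) \<longlonglongrightarrow> 0"
      by (rule tendsto_divide_0[OF tendsto_const filterlim_at_top_imp_at_infinity[OF vr]])
    then have "(\<lambda>n. sqrt (2 / real (v n $ u))) \<longlonglongrightarrow> sqrt 0" by (rule tendsto_real_sqrt)
    then have "(\<lambda>n. 4 * C * sqrt (2 / real (v n $ u)) / \<delta>) \<longlonglongrightarrow> 4 * C * sqrt 0 / \<delta>"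
      by (rule tendsto_divide[OF tendsto_mult[OF tendsto_const] tendsto_const]) (use \<delta> in simp)
    then show ?thesis by simp
  qed
  show ?thesis
  proof (rule Lim_null_comparison[OF _ b0])
    show "\<forall>\<^sub>F n in sequentially. norm (\<integral>\<omega>. partial_sum X (v n) (lam1 n) \<omega> * partial_sum X (v n) (lam2 n) \<omega>
                    / of_nat (vol (v n)) \<partial>M) \<le> 4 * C * sqrt (2 / real (v n $ u)) / \<delta>"
      using evg
    proof eventually_elim
      case (elim n)
      define a where "a = (\<integral>\<omega>. partial_sum X (v n) (lam1 n) \<omega> * partial_sum X (v n) (lam2 n) \<omega> \<partial>M)"
      define V where "V = real (vol (v n))"
      have "0 < vol (v n)" unfolding vol_def
      proof (rule prod_pos)
        fix j show "0 < v n $ j" using v_pos[of n j] by simp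
      qed
      then have V0: "0 < V" unfolding V_def by simp
      have est: "g n * cmod a \<le> 2 * C * V * sqrt (2 / real (v n $ u))"
        unfolding g_def a_def C_def V_def by (rule main_est[OF N r sig stat v_pos])
      have gpos: "0 < g n" using elim \<delta> by linarith
      have "cmod a \<le> 2 * C * V * sqrt (2 / real (v n $ u)) / g n"
        using est gpos by (simp add: field_simps)
      also have "\<dots> \<le> 2 * C * V * sqrt (2 / real (v n $ u)) / (\<delta>/2)"
        using elim \<delta> C0 V0 by (intro divide_left_mono mult_nonneg_nonneg) auto
      finally have "cmod a / V \<le> 4 * C * sqrt (2 / real (v n $ u)) / \<delta>"
        using V0 by (simp add: field_simps)
      then show ?case unfolding a_def V_def by (simp add: norm_divide)
    qed
  qed
qed

end
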